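(* For every graph $G$ with $\mu$ maximal cliques, $b_H(G)\le \mu-1$.
   Context: A grid is the set of integer points of the plane; a grid edge joins two grid points at distance $1$. A path in the grid is a sequence of distinct grid edges in which consecutive edges share exactly one grid point and non-consecutive edges share none; a bend is a pair of consecutive edges with different directions (horizontal/vertical). An EPG representation of a graph $G$ is a family $(P_v)_{v\in V(G)}$ of grid paths such that distinct $u,v$ are adjacent iff $P_u,P_v$ share a grid edge; it is $B_k$-EPG if every path has at most $k$ bends, and Helly if every subfamily of pairwise edge-intersecting paths has a grid edge common to all its members. The Helly-bend number $b_H(G)$ is the smallest $k$ such that $G$ admits a Helly $B_k$-EPG representation. *)

theory Defs
  imports Main
begin

definition simple_graph :: "'a set \<Rightarrow> ('a \<Rightarrow> 'a \<Rightarrow> bool) \<Rightarrow> bool" where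
  "simple_graph V E \<longleftrightarrow> finite V \<and> (\<forall>u\<in>V. \<forall>v\<in>V. E u v \<longleftrightarrow> E v u) \<and> (\<forall>v\<in>V. \<not> E v v)"

definition is_clique :: "'a set \<Rightarrow> ('a \<Rightarrow> 'a \<Rightarrow> bool) \<Rightarrow> 'a set \<Rightarrow> bool" where
  "is_clique V E C \<longleftrightarrow> C \<subseteq> V \<and> (\<forall>u\<in>C. \<forall>v\<in>C. u \<noteq> v \<longrightarrow> E u v)"

definition is_maximal_clique :: "'a set \<Rightarrow> ('a \<Rightarrow> 'a \<Rightarrow> bool) \<Rightarrow> 'a set \<Rightarrow> bool" where
  "is_maximal_clique V E C \<longleftrightarrow> is_clique V E C \<and> (\<forall>D. is_clique V E D \<and> C \<subseteq> D \<longrightarrow> D = C)"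

definition num_maximal_cliques :: "'a set \<Rightarrow> ('a \<Rightarrow> 'a \<Rightarrow> bool) \<Rightarrow> nat" where
  "num_maximal_cliques V E = card {C. is_maximal_clique V E C}"

type_synonym gpoint = "int \<times> int"
type_synonym gedge = "gpoint set"

definition grid_edge :: "gedge \<Rightarrow> bool" where
  "grid_edge e \<longleftrightarrow> (\<exists>p q. e = {p, q} \<and> \<bar>fst p - fst q\<bar> + \<bar>snd p - snd q\<bar> = 1)"

definition horizontal :: "gedge \<Rightarrow> bool" where
  "horizontal e \<longleftrightarrow> (\<exists>p q. e = {p, q} \<and> snd p = snd q \<and> \<bar>fst p - fst q\<bar> = 1)"

definition grid_path :: "gedge list \<Rightarrow> bool" where
  "grid_path P \<longleftrightarrow> P \<noteq> [] \<and> distinct P \<and> (\<forall>e\<in>set P. grid_edge e) \<and>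
     (\<forall>i. Suc i < length P \<longrightarrow> card (P ! i \<inter> P ! Suc i) = 1) \<and>
     (\<forall>i j. i < length P \<and> j < length P \<and> Suc i < j \<longrightarrow> P ! i \<inter> P ! j = {})"

definition bends :: "gedge list \<Rightarrow> nat" where
  "bends P = card {i. Suc i < length P \<and> (horizontal (P ! i) \<noteq> horizontal (P ! Suc i))}"

definition EPG_rep :: "'a set \<Rightarrow> ('a \<Rightarrow> 'a \<Rightarrow> bool) \<Rightarrow> ('a \<Rightarrow> gedge list) \<Rightarrow> bool" where
  "EPG_rep V E P \<longleftrightarrow> (\<forall>v\<in>V. grid_path (P v)) \<and>
     (\<forall>u\<in>V. \<forall>v\<in>V. u \<noteq> v \<longrightarrow> (E u v \<longleftrightarrow> set (P u) \<inter> set (P v) \<noteq> {}))"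

definition Bk_EPG_rep :: "nat \<Rightarrow> 'a set \<Rightarrow> ('a \<Rightarrow> 'a \<Rightarrow> bool) \<Rightarrow> ('a \<Rightarrow> gedge list) \<Rightarrow> bool" where
  "Bk_EPG_rep k V E P \<longleftrightarrow> EPG_rep V E P \<and> (\<forall>v\<in>V. bends (P v) \<le> k)"

definition helly_rep :: "'a set \<Rightarrow> ('a \<Rightarrow> gedge list) \<Rightarrow> bool" where
  "helly_rep V P \<longleftrightarrow> (\<forall>S. S \<subseteq> V \<and> S \<noteq> {} \<and>
       (\<forall>u\<in>S. \<forall>v\<in>S. set (P u) \<inter> set (P v) \<noteq> {}) \<longrightarrow>
       (\<exists>e. \<forall>v\<in>S. e \<in> set (P v)))"

definition helly_bend_number :: "'a set \<Rightarrow> ('a \<Rightarrow> 'a \<Rightarrow> bool) \<Rightarrow> nat" where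
  "helly_bend_number V E = (LEAST k. \<exists>P. Bk_EPG_rep k V E P \<and> helly_rep V P)"

end

theory Submission
  imports Defs
begin

fun mv :: "nat list \<Rightarrow> bool list" where
  "mv [] = []"
| "mv [a] = [odd a]"
| "mv (a # b # r) = replicate (b - a) (odd a) @ replicate (b - a) (\<not> odd a) @ mv (b # r)"

fun chg :: "bool list \<Rightarrow> nat" where
  "chg (x # y # r) = (if x = y then 0 else 1) + chg (y # r)"
| "chg _ = 0"

lemma chg_replicate: "chg (replicate n x) = 0"
  proof (induction n) case (Suc n) then show ?case by (cases n) auto qed simp

lemma chg_Cons: "chg (x # ys) = (if ys \<noteq> [] \<and> x \<noteq> hd ys then 1 else 0) + chg ys"
  by (cases ys) auto

lemma chg_append: "chg (xs @ ys) = chg xs + chg ys + (if xs \<noteq> [] \<and> ys \<noteq> [] \<and> last xs \<noteq> hd ys then 1 else 0)"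
proof (induction xs)
  case Nil then show ?case by simp
next
  case (Cons x xs)
  then show ?case by (cases xs) (auto simp: chg_Cons)
qed

lemma mv_ne: "mv (a # r) \<noteq> []" by (induction r arbitrary: a) auto
lemma hd_mv: "sorted_wrt (<) (a # r) \<Longrightarrow> hd (mv (a # r)) = odd a"
  by (cases r) auto

lemma chg_mv: "sorted_wrt (<) (a # r) \<Longrightarrow> chg (mv (a # r)) \<le> last (a # r) - a"
proof (induction r arbitrary: a)
  case Nil then show ?case by simp
next
  case (Cons b r)
  have ab: "a < b" using Cons.prems by simp
  have IH: "chg (mv (b # r)) \<le> last (b # r) - b" using Cons by simp
  have lb: "b \<le> last (b # r)" using Cons.prems
    by (metis last.simps last_in_set list.distinct(1) order.refl sorted_wrt.simps(2) order.strict_implies_order)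
  have h: "hd (mv (b # r)) = odd b" using Cons.prems hd_mv by simp
  let ?d = "b - a"
  have "chg (mv (a # b # r)) = chg (replicate ?d (odd a) @ replicate ?d (\<not> odd a) @ mv (b # r))" by simp
  also have "\<dots> = 1 + (if odd a = odd b then 1 else 0) + chg (mv (b # r))"
    using ab h mv_ne[of b r] by (auto simp: chg_append chg_replicate)
  also have "\<dots> \<le> (b - a) + chg (mv (b # r))" using ab
    by (cases "odd a = odd b") (auto, presburger+)
  finally show ?case using IH lb ab by simp
qed

lemma card_chg: "card {i. Suc i < length xs \<and> xs ! i \<noteq> xs ! Suc i} = chg xs"
proof (induction xs rule: chg.induct)
  case (1 x y r)
  have "{i. Suc i < length (x # y # r) \<and> (x # y # r) ! i \<noteq> (x # y # r) ! Suc i}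
     = (if x = y then {} else {0}) \<union> Suc ` {i. Suc i < length (y # r) \<and> (y # r) ! i \<noteq> (y # r) ! Suc i}"
    (is "?A = ?B")
  proof (rule set_eqI)
    fix i show "i \<in> ?A \<longleftrightarrow> i \<in> ?B"
      by (cases i) (auto simp: image_iff)
  qed
  then show ?case using 1 by (simp add: card_image)
qed auto


definition cH :: "bool list \<Rightarrow> nat \<Rightarrow> nat" where "cH ms t = length (filter (\<lambda>x. x) (take t ms))"
definition cV :: "bool list \<Rightarrow> nat \<Rightarrow> nat" where "cV ms t = length (filter Not (take t ms))"
definition pt :: "nat \<Rightarrow> bool list \<Rightarrow> nat \<Rightarrow> int \<times> int" where
  "pt a ms t = (int (a + cH ms t), int (a + cV ms t))"
definition edges :: "nat \<Rightarrow> bool list \<Rightarrow> gedge list" where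
  "edges a ms = map (\<lambda>t. {pt a ms t, pt a ms (Suc t)}) [0..<length ms]"

lemma cHV: "t \<le> length ms \<Longrightarrow> cH ms t + cV ms t = t"
  unfolding cH_def cV_def using sum_length_filter_compl[of "\<lambda>x. x" "take t ms"] by simp

lemma pt_sum: "t \<le> length ms \<Longrightarrow> fst (pt a ms t) + snd (pt a ms t) = 2 * int a + int t"
proof -
  assume "t \<le> length ms"
  then have "cH ms t + cV ms t = t" by (rule cHV)
  then have "int (cH ms t) + int (cV ms t) = int t" by linarith
  then show ?thesis unfolding pt_def by simp
qed

lemma pt_inj: "i \<le> length ms \<Longrightarrow> j \<le> length ms \<Longrightarrow> pt a ms i = pt a ms j \<Longrightarrow> i = j"
proof -
  assume h: "i \<le> length ms" "j \<le> length ms" "pt a ms i = pt a ms j"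
  have "2 * int a + int i = 2 * int a + int j"
    using pt_sum[OF h(1), of a] pt_sum[OF h(2), of a] h(3) by metis
  then show "i = j" by simp
qed

lemma pt_Suc: "t < length ms \<Longrightarrow> pt a ms (Suc t) =
   (if ms ! t then (fst (pt a ms t) + 1, snd (pt a ms t)) else (fst (pt a ms t), snd (pt a ms t) + 1))"
  unfolding pt_def cH_def cV_def by (simp add: take_Suc_conv_app_nth)

lemma horiz_H: "horizontal {(x, y), (x + 1, y)}"
  unfolding horizontal_def by (rule exI[of _ "(x, y)"], rule exI[of _ "(x + 1, y)"]) simp

lemma horiz_V: "\<not> horizontal {(x, y), (x, y + 1)}"
  unfolding horizontal_def by (auto simp: doubleton_eq_iff)

lemma grid_H: "grid_edge {(x, y), (x + 1, y)}"
  unfolding grid_edge_def by (rule exI[of _ "(x, y)"], rule exI[of _ "(x + 1, y)"]) simp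

lemma grid_V: "grid_edge {(x, y), (x, y + 1)}"
  unfolding grid_edge_def by (rule exI[of _ "(x, y)"], rule exI[of _ "(x, y + 1)"]) simp

lemma edge_cases: "t < length ms \<Longrightarrow>
   (ms ! t \<and> {pt a ms t, pt a ms (Suc t)} = {(fst (pt a ms t), snd (pt a ms t)), (fst (pt a ms t) + 1, snd (pt a ms t))}) \<or>
   (\<not> ms ! t \<and> {pt a ms t, pt a ms (Suc t)} = {(fst (pt a ms t), snd (pt a ms t)), (fst (pt a ms t), snd (pt a ms t) + 1)})"
  using pt_Suc[of t ms a] by auto

lemma edges_nth: "t < length ms \<Longrightarrow> edges a ms ! t = {pt a ms t, pt a ms (Suc t)}"
  unfolding edges_def by simp

lemma horiz_edges: "t < length ms \<Longrightarrow> horizontal (edges a ms ! t) = ms ! t"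
proof -
  assume t: "t < length ms"
  obtain x y where p: "pt a ms t = (x,y)" by fastforce
  show ?thesis using pt_Suc[OF t, of a] p horiz_H[of x y] horiz_V[of x y] t by (auto simp: edges_nth)
qed

lemma bends_edges: "bends (edges a ms) = chg ms"
proof -
  have "{i. Suc i < length (edges a ms) \<and> horizontal (edges a ms ! i) \<noteq> horizontal (edges a ms ! Suc i)}
      = {i. Suc i < length ms \<and> ms ! i \<noteq> ms ! Suc i}"
  proof (rule Collect_cong)
    fix i
    have l: "length (edges a ms) = length ms" by (simp add: edges_def)
    show "(Suc i < length (edges a ms) \<and> horizontal (edges a ms ! i) \<noteq> horizontal (edges a ms ! Suc i))
       = (Suc i < length ms \<and> ms ! i \<noteq> ms ! Suc i)"
      unfolding l using horiz_edges[of i ms a] horiz_edges[of "Suc i" ms a] by auto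
  qed
  then show ?thesis unfolding bends_def using card_chg by simp
qed

lemma grid_path_edges: "ms \<noteq> [] \<Longrightarrow> grid_path (edges a ms)"
proof -
  assume ne: "ms \<noteq> []"
  let ?p = "pt a ms"
  have inj: "\<And>i j. i \<le> length ms \<Longrightarrow> j \<le> length ms \<Longrightarrow> ?p i = ?p j \<longleftrightarrow> i = j"
    using pt_inj by blast
  have "distinct (edges a ms)"
    unfolding edges_def distinct_map
  proof
    show "inj_on (\<lambda>t. {?p t, ?p (Suc t)}) (set [0..<length ms])"
    proof (rule inj_onI)
      fix i j assume i: "i \<in> set [0..<length ms]" and j: "j \<in> set [0..<length ms]"
        and eq: "{?p i, ?p (Suc i)} = {?p j, ?p (Suc j)}"
      from i j have il: "Suc i \<le> length ms" and jl: "Suc j \<le> length ms" by auto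
      from eq have "?p i \<in> {?p j, ?p (Suc j)}" by blast
      then have "i = j \<or> i = Suc j" using inj il jl by auto
      moreover from eq have "?p j \<in> {?p i, ?p (Suc i)}" by blast
      then have "j = i \<or> j = Suc i" using inj il jl by auto
      ultimately show "i = j" by auto
    qed
  qed simp
  moreover have "\<forall>e\<in>set (edges a ms). grid_edge e"
  proof
    fix e assume "e \<in> set (edges a ms)"
    then obtain t where t: "t < length ms" "e = {?p t, ?p (Suc t)}" unfolding edges_def by auto
    obtain x y where p: "pt a ms t = (x,y)" by fastforce
    show "grid_edge e" using pt_Suc[OF t(1), of a] p grid_H[of x y] grid_V[of x y] t by auto
  qed
  moreover have "\<forall>i. Suc i < length (edges a ms) \<longrightarrow> card (edges a ms ! i \<inter> edges a ms ! Suc i) = 1"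
  proof (intro allI impI)
    fix i assume "Suc i < length (edges a ms)"
    then have l: "Suc i < length ms" by (simp add: edges_def)
    have "edges a ms ! i \<inter> edges a ms ! Suc i = {?p (Suc i)}"
      using l inj[of i "Suc i"] inj[of i "Suc (Suc i)"] inj[of "Suc i" "Suc (Suc i)"]
      by (auto simp: edges_nth)
    then show "card (edges a ms ! i \<inter> edges a ms ! Suc i) = 1" by simp
  qed
  moreover have "\<forall>i j. i < length (edges a ms) \<and> j < length (edges a ms) \<and> Suc i < j \<longrightarrow> edges a ms ! i \<inter> edges a ms ! j = {}"
  proof (intro allI impI)
    fix i j assume h: "i < length (edges a ms) \<and> j < length (edges a ms) \<and> Suc i < j"
    then have l: "i < length ms" "j < length ms" "Suc i < j" by (auto simp: edges_def)
    show "edges a ms ! i \<inter> edges a ms ! j = {}"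
      using l inj[of i j] inj[of i "Suc j"] inj[of "Suc i" j] inj[of "Suc i" "Suc j"]
      by (auto simp: edges_nth)
  qed
  ultimately show ?thesis using ne unfolding grid_path_def by (simp add: edges_def)
qed


lemma cH_app: "cH (xs @ ys) t = cH xs t + cH ys (t - length xs)"
  unfolding cH_def by simp
lemma cV_app: "cV (xs @ ys) t = cV xs t + cV ys (t - length xs)"
  unfolding cV_def by simp
lemma cH_rep: "cH (replicate n x) t = (if x then min t n else 0)"
  unfolding cH_def by (simp add: take_replicate)
lemma cV_rep: "cV (replicate n x) t = (if x then 0 else min t n)"
  unfolding cV_def by (simp add: take_replicate)
lemma cH0: "cH ms 0 = 0" unfolding cH_def by simp
lemma cV0: "cV ms 0 = 0" unfolding cV_def by simp

lemma mv_own: "sorted_wrt (<) (a # r) \<Longrightarrow> t < length (mv (a # r)) \<Longrightarrow>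
  (mv (a # r) ! t \<longrightarrow> a + cV (mv (a # r)) t \<in> set (a # r)) \<and>
  (\<not> mv (a # r) ! t \<longrightarrow> a + cH (mv (a # r)) t \<in> set (a # r))"
proof (induction r arbitrary: a t)
  case Nil then show ?case by (simp add: cH0 cV0)
next
  case (Cons b r)
  have ab: "a < b" using Cons.prems by simp
  define d where "d = b - a"
  define Y where "Y = mv (b # r)"
  have ms: "mv (a # b # r) = replicate d (odd a) @ (replicate d (\<not> odd a) @ Y)"
    by (simp add: d_def Y_def)
  have bd: "b = a + d" using ab d_def by simp
  consider (A) "t < d" | (B) "d \<le> t" "t < 2 * d" | (C) "2 * d \<le> t" by linarith
  then show ?case
  proof cases
    case A
    then show ?thesis unfolding ms by (simp add: nth_append cH_app cV_app cH_rep cV_rep cH0 cV0)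
  next
    case B
    then have "t - d < d" by simp
    then show ?thesis using B unfolding ms by (simp add: nth_append cH_app cV_app cH_rep cV_rep bd cH0 cV0)
  next
    case C
    define t' where "t' = t - 2 * d"
    have tl: "t' < length Y" using Cons.prems(2) C unfolding ms t'_def by simp
    have IH: "(Y ! t' \<longrightarrow> b + cV Y t' \<in> set (b # r)) \<and> (\<not> Y ! t' \<longrightarrow> b + cH Y t' \<in> set (b # r))"
      using Cons.IH[of b t'] Cons.prems(1) tl unfolding Y_def by simp
    have c1: "\<not> t < d" "\<not> t - d < d" using C by simp_all
    have e1: "mv (a # b # r) ! t = Y ! t'" unfolding ms t'_def using C c1 by (simp add: nth_append mult_2)
    have e2: "cV (mv (a # b # r)) t = d + cV Y t'" unfolding ms t'_def using C
      by (simp add: cV_app cV_rep mult_2)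
    have e3: "cH (mv (a # b # r)) t = d + cH Y t'" unfolding ms t'_def using C
      by (simp add: cH_app cH_rep mult_2)
    show ?thesis unfolding e1 e2 e3 using IH bd by (simp add: add.assoc)
  qed
qed

lemma mv_common: "sorted_wrt (<) (a # r) \<Longrightarrow> i \<in> set (a # r) \<Longrightarrow>
  \<exists>t < length (mv (a # r)). mv (a # r) ! t = odd i \<and> a + cH (mv (a # r)) t = i \<and> a + cV (mv (a # r)) t = i"
proof (induction r arbitrary: a)
  case Nil then show ?case by (simp add: cH0 cV0)
next
  case (Cons b r)
  have ab: "a < b" using Cons.prems by simp
  define d where "d = b - a"
  define Y where "Y = mv (b # r)"
  have ms: "mv (a # b # r) = replicate d (odd a) @ (replicate d (\<not> odd a) @ Y)"
    by (simp add: d_def Y_def)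
  have bd: "b = a + d" "0 < d" using ab d_def by simp_all
  show ?case
  proof (cases "i = a")
    case True
    show ?thesis
      by (rule exI[of _ 0]) (simp add: ms True bd cH0 cV0 nth_append)
  next
    case False
    then have "i \<in> set (b # r)" using Cons.prems by simp
    then obtain t' where t': "t' < length Y" "Y ! t' = odd i" "b + cH Y t' = i" "b + cV Y t' = i"
      using Cons.IH[of b] Cons.prems(1) unfolding Y_def by auto
    show ?thesis
    proof (rule exI[of _ "2 * d + t'"], intro conjI)
      show "2 * d + t' < length (mv (a # b # r))" unfolding ms using t' by simp
      show "mv (a # b # r) ! (2 * d + t') = odd i" unfolding ms using t' by (simp add: nth_append)
      show "a + cH (mv (a # b # r)) (2 * d + t') = i" unfolding ms using t' bd
        by (simp add: cH_app cH_rep mult_2)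
      show "a + cV (mv (a # b # r)) (2 * d + t') = i" unfolding ms using t' bd
        by (simp add: cV_app cV_rep mult_2)
    qed
  qed
qed


definition path_of :: "nat list \<Rightarrow> gedge list" where
  "path_of L = edges (hd L) (mv L)"

definition ce :: "nat \<Rightarrow> gedge" where
  "ce i = (if odd i then {(int i, int i), (int i + 1, int i)} else {(int i, int i), (int i, int i + 1)})"

lemma path_grid: "L \<noteq> [] \<Longrightarrow> grid_path (path_of L)"
  unfolding path_of_def by (cases L) (auto intro!: grid_path_edges simp: mv_ne)

lemma path_bends: "sorted_wrt (<) L \<Longrightarrow> L \<noteq> [] \<Longrightarrow> (\<forall>x\<in>set L. x < m) \<Longrightarrow> bends (path_of L) \<le> m - 1"
proof -
  assume s: "sorted_wrt (<) L" and ne: "L \<noteq> []" and b: "\<forall>x\<in>set L. x < m"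
  obtain a r where L: "L = a # r" using ne by (cases L) auto
  have "bends (path_of L) = chg (mv (a # r))" unfolding path_of_def L by (simp add: bends_edges)
  also have "\<dots> \<le> last (a # r) - a" using chg_mv s L by simp
  also have "\<dots> \<le> m - 1" using b L last_in_set[of "a # r"] by force
  finally show ?thesis .
qed

lemma path_common: "sorted_wrt (<) L \<Longrightarrow> i \<in> set L \<Longrightarrow> ce i \<in> set (path_of L)"
proof -
  assume s: "sorted_wrt (<) L" and i: "i \<in> set L"
  obtain a r where L: "L = a # r" using i by (cases L) auto
  obtain t where t: "t < length (mv (a # r))" "mv (a # r) ! t = odd i"
     "a + cH (mv (a # r)) t = i" "a + cV (mv (a # r)) t = i"
    using mv_common[of a r i] s i L by auto
  have p: "pt a (mv (a # r)) t = (int i, int i)" unfolding pt_def using t by simp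
  have "edges a (mv (a # r)) ! t = ce i"
    using pt_Suc[OF t(1), of a] p t(2) unfolding ce_def by (simp add: edges_nth[OF t(1)])
  moreover have "edges a (mv (a # r)) ! t \<in> set (edges a (mv (a # r)))"
    using t(1) by (simp add: edges_def)
  ultimately show ?thesis unfolding path_of_def L by simp
qed

lemma path_own: "sorted_wrt (<) L \<Longrightarrow> e \<in> set (path_of L) \<Longrightarrow>
  (\<exists>x y. e = {(x, y), (x + 1, y)} \<and> y \<in> int ` set L) \<or> (\<exists>x y. e = {(x, y), (x, y + 1)} \<and> x \<in> int ` set L)"
proof -
  assume s: "sorted_wrt (<) L" and e: "e \<in> set (path_of L)"
  obtain a r where L: "L = a # r" using e by (cases L) (auto simp: path_of_def edges_def)
  let ?ms = "mv (a # r)"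
  obtain t where t: "t < length ?ms" "e = {pt a ?ms t, pt a ?ms (Suc t)}"
    using e unfolding path_of_def L edges_def by auto
  have o: "(?ms ! t \<longrightarrow> a + cV ?ms t \<in> set (a # r)) \<and> (\<not> ?ms ! t \<longrightarrow> a + cH ?ms t \<in> set (a # r))"
    using mv_own[OF _ t(1)] s L by simp
  have p: "pt a ?ms t = (int (a + cH ?ms t), int (a + cV ?ms t))" unfolding pt_def by simp
  show ?thesis
  proof (cases "?ms ! t")
    case True
    then have "e = {(int (a + cH ?ms t), int (a + cV ?ms t)), (int (a + cH ?ms t) + 1, int (a + cV ?ms t))}"
      using t pt_Suc[OF t(1), of a] p by simp
    then show ?thesis using o True L by blast
  next
    case False
    then have "e = {(int (a + cH ?ms t), int (a + cV ?ms t)), (int (a + cH ?ms t), int (a + cV ?ms t) + 1)}"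
      using t pt_Suc[OF t(1), of a] p by simp
    then show ?thesis using o False L by blast
  qed
qed

lemma path_share: "sorted_wrt (<) L1 \<Longrightarrow> sorted_wrt (<) L2 \<Longrightarrow> e \<in> set (path_of L1) \<Longrightarrow> e \<in> set (path_of L2)
  \<Longrightarrow> \<exists>k. k \<in> set L1 \<and> k \<in> set L2"
proof -
  assume s1: "sorted_wrt (<) L1" and s2: "sorted_wrt (<) L2" and e1: "e \<in> set (path_of L1)" and e2: "e \<in> set (path_of L2)"
  from path_own[OF s1 e1] path_own[OF s2 e2] show ?thesis
    by (auto simp: doubleton_eq_iff)
qed


lemma clique_ext: "finite V \<Longrightarrow> is_clique V E D \<Longrightarrow> \<exists>C. is_maximal_clique V E C \<and> D \<subseteq> C"
proof -
  assume fV: "finite V" and D: "is_clique V E D"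
  let ?A = "{C. is_clique V E C \<and> D \<subseteq> C}"
  have "?A \<subseteq> Pow V" by (auto simp: is_clique_def)
  then have fA: "finite ?A" using fV finite_subset by blast
  have "D \<in> ?A" using D by simp
  then obtain C where C: "C \<in> ?A" "\<forall>b\<in>?A. C \<le> b \<longrightarrow> C = b"
    using finite_has_maximal[OF fA] by blast
  have "is_maximal_clique V E C"
    unfolding is_maximal_clique_def using C by auto
  then show ?thesis using C by blast
qed

theorem corollary2p1:
  fixes V :: "'a set" and E :: "'a \<Rightarrow> 'a \<Rightarrow> bool"
  assumes "simple_graph V E"
  shows "helly_bend_number V E \<le> num_maximal_cliques V E - 1"
proof -
  have fV: "finite V" and sym: "\<And>u v. u \<in> V \<Longrightarrow> v \<in> V \<Longrightarrow> E u v \<longleftrightarrow> E v u"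
    using assms unfolding simple_graph_def by auto
  define M where "M = {C. is_maximal_clique V E C}"
  have "M \<subseteq> Pow V" by (auto simp: M_def is_maximal_clique_def is_clique_def)
  then have fM: "finite M" using fV finite_subset by blast
  obtain h where h: "bij_betw h M {0..<card M}" using ex_bij_betw_finite_nat[OF fM] by blast
  define S where "S v = h ` {C \<in> M. v \<in> C}" for v
  define L where "L v = sorted_list_of_set (S v)" for v
  define P where "P v = path_of (L v)" for v
  have fS: "finite (S v)" for v unfolding S_def using fM by simp
  have setL: "set (L v) = S v" for v unfolding L_def using fS by simp
  have sL: "sorted_wrt (<) (L v)" for v unfolding L_def by (rule strict_sorted_list_of_set)
  have Sb: "\<forall>x\<in>set (L v). x < card M" for v
    unfolding setL S_def using h by (auto simp: bij_betw_def)
  have inS: "h C \<in> S v" if "C \<in> M" "v \<in> C" for C v unfolding S_def using that by blast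
  have Sin: "\<exists>C. C \<in> M \<and> v \<in> C \<and> h C = k" if "k \<in> S v" for k v using that unfolding S_def by blast
  have hinj: "inj_on h M" using h by (simp add: bij_betw_def)
  have ne: "L v \<noteq> []" if "v \<in> V" for v
  proof -
    have "is_clique V E {v}" using that by (simp add: is_clique_def)
    then obtain C where "is_maximal_clique V E C" "{v} \<subseteq> C" using clique_ext[OF fV] by blast
    then have "h C \<in> S v" using inS M_def by auto
    then show ?thesis using setL[of v] by auto
  qed
  have adj: "E u v \<longleftrightarrow> set (P u) \<inter> set (P v) \<noteq> {}" if "u \<in> V" "v \<in> V" "u \<noteq> v" for u v
  proof
    assume "E u v"
    then have "is_clique V E {u, v}" using that sym by (auto simp: is_clique_def)
    then obtain C where C: "is_maximal_clique V E C" "{u, v} \<subseteq> C" using clique_ext[OF fV] by blast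
    then have "h C \<in> set (L u)" "h C \<in> set (L v)" using inS M_def setL by auto
    then have "ce (h C) \<in> set (P u)" "ce (h C) \<in> set (P v)" unfolding P_def using path_common sL by auto
    then show "set (P u) \<inter> set (P v) \<noteq> {}" by blast
  next
    assume "set (P u) \<inter> set (P v) \<noteq> {}"
    then obtain e where "e \<in> set (path_of (L u))" "e \<in> set (path_of (L v))" unfolding P_def by blast
    then obtain k where "k \<in> S u" "k \<in> S v" using path_share[OF sL sL] setL by metis
    then obtain C1 C2 where C: "C1 \<in> M" "u \<in> C1" "h C1 = k" "C2 \<in> M" "v \<in> C2" "h C2 = k"
      using Sin by metis
    then have "C1 = C2" using hinj by (metis inj_on_def)
    then show "E u v" using C that unfolding M_def is_maximal_clique_def is_clique_def by auto
  qed
  have rep: "Bk_EPG_rep (num_maximal_cliques V E - 1) V E P"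
    unfolding Bk_EPG_rep_def EPG_rep_def
  proof (intro conjI ballI impI)
    fix v assume "v \<in> V"
    then show "grid_path (P v)" unfolding P_def using path_grid ne by auto
    show "bends (P v) \<le> num_maximal_cliques V E - 1"
      unfolding P_def num_maximal_cliques_def M_def[symmetric]
      using path_bends[OF sL ne[OF \<open>v \<in> V\<close>] Sb] .
  next
    fix u v assume "u \<in> V" "v \<in> V" "u \<noteq> v"
    then show "E u v = (set (P u) \<inter> set (P v) \<noteq> {})" using adj by blast
  qed
  have helly: "helly_rep V P"
    unfolding helly_rep_def
  proof (intro allI impI)
    fix T assume T: "T \<subseteq> V \<and> T \<noteq> {} \<and> (\<forall>u\<in>T. \<forall>v\<in>T. set (P u) \<inter> set (P v) \<noteq> {})"
    then have "is_clique V E T" using adj unfolding is_clique_def by blast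
    then obtain C where C: "is_maximal_clique V E C" "T \<subseteq> C" using clique_ext[OF fV] by blast
    have "\<forall>v\<in>T. ce (h C) \<in> set (P v)"
    proof
      fix v assume "v \<in> T"
      then have "h C \<in> set (L v)" using inS C M_def setL by auto
      then show "ce (h C) \<in> set (P v)" unfolding P_def using path_common sL by auto
    qed
    then show "\<exists>e. \<forall>v\<in>T. e \<in> set (P v)" by blast
  qed
  have "\<exists>P. Bk_EPG_rep (num_maximal_cliques V E - 1) V E P \<and> helly_rep V P" using rep helly by blast
  then show ?thesis unfolding helly_bend_number_def by (rule Least_le)
qed

end
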